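(* Let $(t_n)_{n\in\mathbb{N}}$ be a strictly increasing sequence in $\mathbb{R}$ and $(b_n)_{n\in\mathbb{N}}$ a sequence in $(1,\infty)$. Let $\mu=\sum_{n=1}^\infty\beta_n\delta_{t_n}$ with $\beta_n=\frac{\sqrt{b_n}+1}{\sqrt{b_n}-1}$. Then: (a) if $\inf_n(t_{n+1}-t_n)>0$ and $\inf_n b_n>1$, then $\mu$ is translation bounded, i.e. $\sup_{x\in\mathbb{R}}\mu([x,x+1])<\infty$; (b) $\mu$ is eventually periodic if and only if the sequence $\big((t_{n+1}-t_n,b_n)\big)_{n\in\mathbb{N}}$ is eventually periodic; (c) if the sets $\{t_{n+1}-t_n:n\in\mathbb{N}\}$ and $\{b_n:n\in\mathbb{N}\}$ are finite, then $\mu$ has the simple finite decomposition property.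
   Context: A piece is a pair $(\nu,I)$, written $\nu^I$, consisting of a left-closed right-open interval $I\subseteq\mathbb{R}$ of positive length $\lambda(I)$ and a translation bounded measure $\nu$ supported on $I$. It is finite if $\lambda(I)<\infty$. It occurs in a measure $\mu$ at $x$ if $1_{x+I}\mu$ is a translate of $\nu$. The concatenation $\nu^I=\nu_1^{I_1}\mid\nu_2^{I_2}\mid\cdots$ of finite pieces $(\nu_j^{I_j})_{j\in N}$, $N\subseteq\mathbb{N}$, is given by \[I=[\min I_1,\min I_1+\sum_{j}\lambda(I_j)),\qquad \nu=\nu_1+\sum_{j\ge2}\nu_j\big(\cdot-(\min I_1+\textstyle\sum_{k<j}\lambda(I_k)-\min I_j)\big).\] $\mu$ has the finite decomposition property if there exist a finite set $\mathcal{P}$ of finite pieces, each with $\min I=0$, and $x_0$ such that $(1_{[x_0,\infty)}\mu)^{[x_0,\infty)}$ is a translate of a concatenation $\nu_1^{I_1}\mid\nu_2^{I_2}\mid\cdots$ of elements of $\mathcal{P}$. $\mu$ has the simple finite decomposition property if it has such a decomposition and there is $\ell>0$ with the following property. Suppose two concatenations $A\mid\nu_1^{I_1}\mid\cdots\mid\nu_{m_1}^{I_{m_1}}$ and $A\mid\mu_1^{J_1}\mid\cdots\mid\mu_{m_2}^{J_{m_2}}$ of consecutive pieces of the decomposition (all in $\mathcal{P}$) occur in $\mu$, such that: - the common first part $A=\nu_{-m}^{I_{-m}}\mid\cdots\mid\nu_0^{I_0}$ has length $\ge\ell$; - the two tails both have length $\ge\ell$; - the two tails, starting at $0$, agree after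 multiplication by $1_{[0,\ell)}$. Then $\nu_1^{I_1}=\mu_1^{J_1}$. A measure $\mu$ is eventually periodic if there are $x_0$ and $p>0$ with $\mu(A+p)=\mu(A)$ for all Borel $A\subseteq[x_0,\infty)$. A sequence is eventually periodic if it is periodic from some index on. *)

theory Defs
  imports "HOL-Analysis.Analysis"
begin

text \<open>Measures on the real line are Isabelle measures with sigma algebra the Borel sets.\<close>

definition translation_bounded :: "real measure \<Rightarrow> bool" where
  "translation_bounded \<nu> \<longleftrightarrow> (SUP x. emeasure \<nu> {x..x+1}) < \<infinity>"

definition translate :: "real measure \<Rightarrow> real \<Rightarrow> real measure" where
  "translate \<nu> s = distr \<nu> borel (\<lambda>x. x + s)"

definition restr :: "real measure \<Rightarrow> real set \<Rightarrow> real measure" where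
  "restr \<nu> S = density \<nu> (indicator S)"

type_synonym piece = "real measure \<times> real set"

definition lcro_interval :: "real set \<Rightarrow> bool" where
  "lcro_interval I \<longleftrightarrow> (\<exists>a b. a < b \<and> I = {a..<b}) \<or> (\<exists>a. I = {a..})"

definition is_piece :: "piece \<Rightarrow> bool" where
  "is_piece q \<longleftrightarrow> lcro_interval (snd q) \<and> sets (fst q) = sets borel
     \<and> translation_bounded (fst q) \<and> emeasure (fst q) (UNIV - snd q) = 0"

definition finite_piece :: "piece \<Rightarrow> bool" where
  "finite_piece q \<longleftrightarrow> is_piece q \<and> emeasure lborel (snd q) < \<infinity>"

definition translate_piece :: "piece \<Rightarrow> real \<Rightarrow> piece" where
  "translate_piece q s = (translate (fst q) s, (\<lambda>x. x + s) ` snd q)"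

text \<open>Concatenation of the finite pieces p j, j \<in> N, where N is {..<n} or UNIV
  (index 0 plays the role of index 1 in the paper).\<close>
definition concat_pieces :: "(nat \<Rightarrow> piece) \<Rightarrow> nat set \<Rightarrow> piece" where
  "concat_pieces p N =
    (let a = Inf (snd (p 0));
         off = (\<lambda>j. a + (\<Sum>k<j. measure lborel (snd (p k))) - Inf (snd (p j)))
     in (measure_of UNIV (sets borel)
           (\<lambda>A. \<Sum>j. if j \<in> N then emeasure (translate (fst (p j)) (off j)) A else 0),
         {x. a \<le> x \<and> ennreal (x - a) < (\<Sum>j. if j \<in> N then emeasure lborel (snd (p j)) else 0)}))"

definition fdp_witness :: "real measure \<Rightarrow> piece set \<Rightarrow> (nat \<Rightarrow> piece) \<Rightarrow> real \<Rightarrow> bool" where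
  "fdp_witness \<mu> P p x0 \<longleftrightarrow> finite P
     \<and> (\<forall>q\<in>P. finite_piece q \<and> Inf (snd q) = 0)
     \<and> (\<forall>j. p j \<in> P)
     \<and> (\<exists>s. translate_piece (restr \<mu> {x0..}, {x0..}) s = concat_pieces p UNIV)"

definition finite_decomposition_property :: "real measure \<Rightarrow> bool" where
  "finite_decomposition_property \<mu> \<longleftrightarrow> (\<exists>P p x0. fdp_witness \<mu> P p x0)"

definition simple_finite_decomposition_property :: "real measure \<Rightarrow> bool" where
  "simple_finite_decomposition_property \<mu> \<longleftrightarrow>
    (\<exists>P p x0 L. fdp_witness \<mu> P p x0 \<and> L > 0 \<and>
      (\<forall>k k' m m1 m2.
         (\<forall>r\<le>m. p (k + r) = p (k' + r))
         \<and> emeasure lborel (snd (concat_pieces (\<lambda>r. p (k + r)) {..m})) \<ge> ennreal L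
         \<and> emeasure lborel (snd (concat_pieces (\<lambda>r. p (k + m + 1 + r)) {..<m1})) \<ge> ennreal L
         \<and> emeasure lborel (snd (concat_pieces (\<lambda>r. p (k' + m + 1 + r)) {..<m2})) \<ge> ennreal L
         \<and> restr (fst (concat_pieces (\<lambda>r. p (k + m + 1 + r)) {..<m1})) {0..<L}
           = restr (fst (concat_pieces (\<lambda>r. p (k' + m + 1 + r)) {..<m2})) {0..<L}
         \<longrightarrow> p (k + m + 1) = p (k' + m + 1)))"

definition eventually_periodic_measure :: "real measure \<Rightarrow> bool" where
  "eventually_periodic_measure \<mu> \<longleftrightarrow> (\<exists>x0 p. p > 0 \<and>
     (\<forall>A\<in>sets borel. A \<subseteq> {x0..} \<longrightarrow> emeasure \<mu> ((\<lambda>x. x + p) ` A) = emeasure \<mu> A))"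

definition eventually_periodic_seq :: "(nat \<Rightarrow> 'a) \<Rightarrow> bool" where
  "eventually_periodic_seq s \<longleftrightarrow> (\<exists>N p. p > 0 \<and> (\<forall>n\<ge>N. s (n + p) = s n))"

definition beta :: "real \<Rightarrow> real" where
  "beta x = (sqrt x + 1) / (sqrt x - 1)"

definition dirac_comb :: "(nat \<Rightarrow> real) \<Rightarrow> (nat \<Rightarrow> real) \<Rightarrow> real measure" where
  "dirac_comb t b = measure_of UNIV (sets borel)
     (\<lambda>A. \<Sum>n. ennreal (beta (b n)) * indicator A (t n))"

end

theory Submission
  imports Defs
begin


definition Mc :: "(nat \<Rightarrow> ennreal) \<Rightarrow> (nat \<Rightarrow> real) \<Rightarrow> real measure" where
  "Mc w f = distr (density (count_space UNIV) w) borel f"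

lemma sets_Mc[simp, measurable_cong]: "sets (Mc w f) = sets borel"
  by (simp add: Mc_def)

lemma space_Mc[simp]: "space (Mc w f) = UNIV"
  by (simp add: Mc_def)

lemma emeasure_Mc:
  assumes "A \<in> sets borel"
  shows "emeasure (Mc w f) A = (\<Sum>n. w n * indicator A (f n))"
proof -
  have "emeasure (Mc w f) A = emeasure (density (count_space UNIV) w) (f -` A)"
    unfolding Mc_def using assms by (subst emeasure_distr) auto
  also have "\<dots> = (\<integral>\<^sup>+ n. w n * indicator (f -` A) n \<partial>count_space UNIV)"
    by (subst emeasure_density) auto
  also have "\<dots> = (\<Sum>n. w n * indicator A (f n))"
    by (subst nn_integral_count_space_nat) (simp add: indicator_def)
  finally show ?thesis .
qed

lemma measure_of_Mc:
  "measure_of UNIV (sets borel) (\<lambda>A. \<Sum>n. w n * indicator A (f n)) = Mc w f"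
proof -
  have "measure_of UNIV (sets borel) (\<lambda>A. \<Sum>n. w n * indicator A (f n))
      = measure_of UNIV (sets borel) (emeasure (Mc w f))"
    by (rule measure_of_eq) (auto simp: emeasure_Mc sets.sigma_sets_eq[of borel, simplified])
  also have "\<dots> = Mc w f"
    using measure_of_of_measure[of "Mc w f"] by simp
  finally show ?thesis .
qed

lemma dirac_comb_Mc: "dirac_comb t b = Mc (\<lambda>n. ennreal (beta (b n))) t"
  unfolding dirac_comb_def by (rule measure_of_Mc)

lemma Mc_point:
  assumes "inj f"
  shows "emeasure (Mc w f) {f j} = w j"
proof -
  have "(\<Sum>n. w n * indicator {f j} (f n)) = (\<Sum>n\<in>{j}. w n * indicator {f j} (f n))"
    by (rule suminf_finite) (use assms in \<open>auto simp: inj_def indicator_def\<close>)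
  then show ?thesis by (simp add: emeasure_Mc)
qed

lemma Mc_nopoint:
  assumes "\<And>j. f j \<noteq> y"
  shows "emeasure (Mc w f) {y} = 0"
  using assms by (simp add: emeasure_Mc)

lemma Mc_point_ex:
  assumes "emeasure (Mc w f) {y} \<noteq> 0"
  shows "\<exists>j. f j = y"
  using assms Mc_nopoint by blast



lemma beta_alt: "1 < x \<Longrightarrow> beta x = 1 + 2 / (sqrt x - 1)"
proof -
  assume "1 < x"
  then have s: "1 < sqrt x" by simp
  then show ?thesis unfolding beta_def by (simp add: field_simps)
qed

lemma beta_pos: "x > 1 \<Longrightarrow> beta x > 0"
  by (simp add: beta_alt add_pos_nonneg)

lemma beta_anti: assumes "1 < B" "B \<le> y" shows "beta y \<le> beta B"
proof -
  have s: "sqrt B \<le> sqrt y" using assms by simp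
  have s1: "1 < sqrt B" using assms by simp
  have "2 / (sqrt y - 1) \<le> 2 / (sqrt B - 1)"
    using s s1 by (intro divide_left_mono) auto
  then show ?thesis using assms by (simp add: beta_alt)
qed

lemma beta_inj: assumes "1 < x" "1 < y" "beta x = beta y" shows "x = y"
proof -
  have a: "1 < sqrt x" using assms by simp
  have b: "1 < sqrt y" using assms by simp
  have "2 / (sqrt x - 1) = 2 / (sqrt y - 1)" using assms by (simp add: beta_alt)
  then have "sqrt x - 1 = sqrt y - 1" using a b by (simp add: field_simps)
  then show ?thesis by simp
qed
lemma gap_mult:
  fixes t :: "nat \<Rightarrow> real"
  assumes "\<And>n. d \<le> t (Suc n) - t n"
  shows "t (n + k) - t n \<ge> real k * d"
proof (induction k)
  case (Suc k) then show ?case using assms[of "n+k"] by (simp add: algebra_simps)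
qed simp

lemma part_a:
  fixes t b :: "nat \<Rightarrow> real"
  assumes mono: "strict_mono t" and b1: "\<forall>n. b n > 1"
    and d: "(INF n. t (Suc n) - t n) > 0" and B: "(INF n. b n) > 1"
  shows "translation_bounded (dirac_comb t b)"
proof -
  define \<delta> where "\<delta> = (INF n. t (Suc n) - t n)"
  define Bm where "Bm = (INF n. b n)"
  have gpos: "t (Suc n) - t n > 0" for n using mono by (simp add: strict_mono_def)
  have dle: "\<delta> \<le> t (Suc n) - t n" for n unfolding \<delta>_def
    by (rule cINF_lower) (use gpos in \<open>auto intro!: bdd_belowI[of _ 0] less_imp_le\<close>)
  have Ble: "Bm \<le> b n" for n unfolding Bm_def
    by (rule cINF_lower) (use b1 in \<open>auto intro!: bdd_belowI[of _ 1] less_imp_le\<close>)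
  have dp: "\<delta> > 0" and Bp: "Bm > 1" using d B by (auto simp: \<delta>_def Bm_def)
  define K where "K = nat \<lfloor>1 / \<delta>\<rfloor>"
  define C where "C = beta Bm"
  have wle: "ennreal (beta (b n)) \<le> ennreal C" for n
    unfolding C_def using beta_anti[OF Bp Ble] by (rule ennreal_leI)
  have bound: "emeasure (dirac_comb t b) {x..x+1} \<le> of_nat (Suc K) * ennreal C" for x
  proof -
    define S where "S = {n. t n \<in> {x..x+1}}"
    define n0 where "n0 = (LEAST n. n \<in> S)"
    have inS: "n \<in> S \<Longrightarrow> n \<in> {n0..n0+K}" for n
    proof -
      assume n: "n \<in> S"
      then have n0S: "n0 \<in> S" and "n0 \<le> n" unfolding n0_def by (auto intro: LeastI Least_le)
      then obtain k where k: "n = n0 + k" using le_Suc_ex by blast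
      have "real k * \<delta> \<le> t n - t n0" using gap_mult[where d=\<delta> and t=t and n=n0 and k=k, OF dle] k by simp
      also have "\<dots> \<le> 1" using n n0S by (auto simp: S_def)
      finally have "real k \<le> 1 / \<delta>" using dp by (simp add: field_simps)
      then have "k \<le> K" unfolding K_def by linarith
      then show ?thesis using k by simp
    qed
    have "emeasure (dirac_comb t b) {x..x+1} = (\<Sum>n. ennreal (beta (b n)) * indicator {x..x+1} (t n))"
      by (simp add: dirac_comb_Mc emeasure_Mc)
    also have "\<dots> = (\<Sum>n\<in>{n0..n0+K}. ennreal (beta (b n)) * indicator {x..x+1} (t n))"
      by (rule suminf_finite) (use inS in \<open>auto simp: S_def indicator_def\<close>)
    also have "\<dots> \<le> (\<Sum>n\<in>{n0..n0+K}. ennreal C)"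
      by (rule sum_mono) (use wle in \<open>auto simp: indicator_def\<close>)
    also have "\<dots> = of_nat (Suc K) * ennreal C"
    proof -
      have "card {n0..n0+K} = Suc K" by simp
      then show ?thesis by (simp only: sum_constant)
    qed
    finally show ?thesis .
  qed
  have "(SUP x. emeasure (dirac_comb t b) {x..x+1}) \<le> of_nat (Suc K) * ennreal C"
    by (rule SUP_least) (rule bound)
  moreover have "of_nat (Suc K) * ennreal C < \<infinity>"
    by (simp add: ennreal_mult_less_top of_nat_less_top)
  ultimately show ?thesis unfolding translation_bounded_def
    by (rule le_less_trans)
qed



lemma part_b1:
  fixes t b :: "nat \<Rightarrow> real"
  assumes mono: "strict_mono t"
    and per: "eventually_periodic_seq (\<lambda>n. (t (Suc n) - t n, b n))"
  shows "eventually_periodic_measure (dirac_comb t b)"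
proof -
  obtain N P where P: "P > 0" and hP: "\<And>n. n \<ge> N \<Longrightarrow> t (Suc (n + P)) - t (n + P) = t (Suc n) - t n \<and> b (n + P) = b n"
    using per unfolding eventually_periodic_seq_def by auto
  define p where "p = t (N + P) - t N"
  have pp: "p > 0" using mono P unfolding p_def strict_mono_def by simp
  have tk: "t (N + k + P) = t (N + k) + p" for k
  proof (induction k)
    case 0 then show ?case by (simp add: p_def)
  next
    case (Suc k)
    have "t (N + Suc k + P) = t (N + k + P) + (t (Suc (N + k + P)) - t (N + k + P))" by simp
    also have "\<dots> = t (N + k) + p + (t (Suc (N + k)) - t (N + k))" using Suc hP[of "N+k"] by simp
    finally show ?case by simp
  qed
  have tp: "t (n + P) = t n + p" if "n \<ge> N" for n
    using tk[of "n - N"] that by simp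
  have bp: "b (n + P) = b n" if "n \<ge> N" for n using hP that by simp
  define w where "w n = ennreal (beta (b n))" for n
  have lt: "j < m \<Longrightarrow> t j < t m" for j m using mono by (simp add: strict_mono_def)
  have key: "emeasure (dirac_comb t b) ((\<lambda>x. x + p) ` A) = emeasure (dirac_comb t b) A"
    if A: "A \<in> sets borel" and Asub: "A \<subseteq> {t N..}" for A
  proof -
    have img: "(\<lambda>x. x + p) ` A = (\<lambda>x. x - p) -` A"
      by (auto simp: image_iff intro!: bexI[where x="_ - p"])
    have Ab: "(\<lambda>x. x - p) -` A \<in> sets borel"
    proof -
      have "(\<lambda>x::real. x - p) \<in> borel_measurable borel" by measurable
      from measurable_sets[OF this A] show ?thesis by simp
    qed
    have e1: "emeasure (dirac_comb t b) ((\<lambda>x. x + p) ` A) = (\<Sum>j. w (j + (N + P)) * indicator A (t (j + (N + P)) - p))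
                    + (\<Sum>j<N+P. w j * indicator A (t j - p))"
    proof -
      have "emeasure (dirac_comb t b) ((\<lambda>x. x + p) ` A) = (\<Sum>n. w n * indicator A (t n - p))"
        unfolding img dirac_comb_Mc using Ab by (simp add: emeasure_Mc w_def indicator_def)
      also have "\<dots> = (\<Sum>j. w (j + (N + P)) * indicator A (t (j + (N + P)) - p))
                    + (\<Sum>j<N+P. w j * indicator A (t j - p))"
        by (rule suminf_offset) simp
      finally show ?thesis .
    qed
    have z1: "(\<Sum>j<N+P. w j * indicator A (t j - p)) = 0"
    proof (rule sum.neutral, intro ballI)
      fix j assume "j \<in> {..<N+P}"
      then have "t j < t (N + P)" using lt by simp
      then have "t j - p < t N" unfolding p_def by simp
      then show "w j * indicator A (t j - p) = 0" using Asub by (auto simp: indicator_def)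
    qed
    have f: "(\<lambda>j. w (j + (N + P)) * indicator A (t (j + (N + P)) - p)) = (\<lambda>j. w (j + N) * indicator A (t (j + N)))"
    proof
      fix j
      show "w (j + (N + P)) * indicator A (t (j + (N + P)) - p) = w (j + N) * indicator A (t (j + N))"
        using tp[of "j+N"] bp[of "j+N"] by (simp add: w_def add.assoc)
    qed
    have z2: "(\<Sum>j<N. w j * indicator A (t j)) = 0"
    proof (rule sum.neutral, intro ballI)
      fix j assume "j \<in> {..<N}"
      then have "t j < t N" using lt by simp
      then show "w j * indicator A (t j) = 0" using Asub by (auto simp: indicator_def)
    qed
    have e2: "emeasure (dirac_comb t b) A = (\<Sum>j. w (j + N) * indicator A (t (j + N))) + (\<Sum>j<N. w j * indicator A (t j))"
    proof -
      have "emeasure (dirac_comb t b) A = (\<Sum>n. w n * indicator A (t n))"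
        unfolding dirac_comb_Mc using A by (simp add: emeasure_Mc w_def)
      also have "\<dots> = (\<Sum>j. w (j + N) * indicator A (t (j + N))) + (\<Sum>j<N. w j * indicator A (t j))"
        by (rule suminf_offset) simp
      finally show ?thesis .
    qed
    show ?thesis
      unfolding e1 e2 z1 z2 f ..
  qed
  show ?thesis unfolding eventually_periodic_measure_def
    using pp key by blast
qed



lemma part_b2:
  fixes t b :: "nat \<Rightarrow> real"
  assumes mono: "strict_mono t" and b1: "\<forall>n. b n > 1"
    and lim: "filterlim t at_top sequentially"
    and per: "eventually_periodic_measure (dirac_comb t b)"
  shows "eventually_periodic_seq (\<lambda>n. (t (Suc n) - t n, b n))"
proof -
  define w where "w n = ennreal (beta (b n))" for n
  have mu: "dirac_comb t b = Mc w t" unfolding w_def by (rule dirac_comb_Mc)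
  have inj: "inj t" using mono by (rule strict_mono_imp_inj_on)
  have lt: "t i < t j \<longleftrightarrow> i < j" for i j using mono by (rule strict_mono_less)
  obtain x0 p where pp: "p > 0" and hper: "\<And>A. A \<in> sets borel \<Longrightarrow> A \<subseteq> {x0..} \<Longrightarrow>
      emeasure (Mc w t) ((\<lambda>x. x + p) ` A) = emeasure (Mc w t) A"
    using per unfolding eventually_periodic_measure_def mu by blast
  have sing: "emeasure (Mc w t) {x + p} = emeasure (Mc w t) {x}" if "x \<ge> x0" for x
    using hper[of "{x}"] that by simp
  have pt: "emeasure (Mc w t) {t n} = w n" for n using Mc_point[OF inj] .
  have wnz: "w n \<noteq> 0" for n
  proof -
    have "beta (b n) > 0" using beta_pos b1 by blast
    then show ?thesis unfolding w_def by simp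
  qed
  have ex1: "\<exists>m. t m = t n + p" if "t n \<ge> x0" for n
    by (rule Mc_point_ex[where w=w]) (use sing[OF that] pt wnz in simp)
  have ex2: "\<exists>j. t j = x" if "x \<ge> x0" "t m = x + p" for x m
    by (rule Mc_point_ex[where w=w]) (use sing[OF that(1)] pt[of m] that(2) wnz in simp)
  obtain N where N: "\<And>n. n \<ge> N \<Longrightarrow> t n \<ge> x0"
    using lim unfolding filterlim_at_top eventually_sequentially by blast
  obtain m0 where m0: "t m0 = t N + p" using ex1 N by blast
  have "m0 > N" using m0 pp lt[of N m0] by simp
  define P where "P = m0 - N"
  have P0: "P > 0" using \<open>m0 > N\<close> by (simp add: P_def)
  have tk: "t (N + k + P) = t (N + k) + p" for k
  proof (induction k)
    case 0 then show ?case using m0 \<open>m0 > N\<close> by (simp add: P_def)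
  next
    case (Suc k)
    define n where "n = N + k"
    have IH: "t (n + P) = t n + p" using Suc by (simp add: n_def)
    have xn1: "t (Suc n) \<ge> x0" using N[of "Suc n"] by (simp add: n_def)
    obtain m' where m': "t m' = t (Suc n) + p" using ex1[OF xn1] by blast
    have "t (n + P) < t m'" using IH m' lt[of n "Suc n"] by simp
    then have "n + P < m'" using lt by simp
    moreover have "\<not> Suc n + P < m'"
    proof
      assume c: "Suc n + P < m'"
      define y where "y = t (Suc n + P) - p"
      have "t (n + P) < t (Suc n + P)" using lt by simp
      then have y1: "t n < y" using IH by (simp add: y_def)
      have "t (Suc n + P) < t m'" using c lt by simp
      then have y2: "y < t (Suc n)" using m' by (simp add: y_def)
      have "y \<ge> x0" using y1 N[of n] by (simp add: n_def)
      then obtain j where j: "t j = y" using ex2[of y "Suc n + P"] by (auto simp: y_def)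
      have "n < j" "j < Suc n" using y1 y2 j lt by (metis, metis)
      then show False by simp
    qed
    ultimately have "m' = Suc n + P" by simp
    then show ?case using m' by (simp add: n_def)
  qed
  have tp: "t (n + P) = t n + p" if "n \<ge> N" for n
    using tk[of "n - N"] that by simp
  have bp: "b (n + P) = b n" if "n \<ge> N" for n
  proof -
    have "w (n + P) = w n"
      using pt[of "n+P"] pt[of n] tp[OF that] sing[of "t n"] N[OF that] by simp
    then have "beta (b (n + P)) = beta (b n)"
      unfolding w_def using beta_pos b1 by (simp add: less_imp_le)
    then show ?thesis using beta_inj b1 by blast
  qed
  have key: "(t (Suc (n + P)) - t (n + P), b (n + P)) = (t (Suc n) - t n, b n)" if n: "N \<le> n" for n
  proof -
    have "Suc n + P = Suc (n + P)" by simp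
    then have "t (Suc (n + P)) = t (Suc n) + p" using tp[of "Suc n"] n by simp
    then show "(t (Suc (n + P)) - t (n + P), b (n + P)) = (t (Suc n) - t n, b n)"
      using tp[OF n] bp[OF n] by simp
  qed
  show ?thesis unfolding eventually_periodic_seq_def
    using P0 key by blast
qed



definition pc :: "real \<Rightarrow> real \<Rightarrow> piece" where
  "pc \<beta> g = (Mc (\<lambda>j. if j = 0 then ennreal \<beta> else 0) (\<lambda>_. 0), {0..<g})"

lemma pc_em: assumes "A \<in> sets borel"
  shows "emeasure (fst (pc \<beta> g)) A = ennreal \<beta> * indicator A (0::real)"
proof -
  have "(\<Sum>j. (if j = 0 then ennreal \<beta> else 0) * indicator A (0::real))
      = (\<Sum>j\<in>{0::nat}. (if j = 0 then ennreal \<beta> else 0) * indicator A (0::real))"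
    by (rule suminf_finite) auto
  then show ?thesis using assms by (simp add: pc_def emeasure_Mc)
qed

lemma vimage_plus_borel: "A \<in> sets borel \<Longrightarrow> (\<lambda>x::real. x + s) -` A \<in> sets borel"
proof -
  assume A: "A \<in> sets borel"
  have "(\<lambda>x::real. x + s) \<in> borel_measurable borel" by measurable
  from measurable_sets[OF this A] show ?thesis by simp
qed

lemma tr_em:
  assumes "sets \<nu> = sets borel" "A \<in> sets borel"
  shows "emeasure (translate \<nu> s) A = emeasure \<nu> ((\<lambda>x. x + s) -` A)"
proof -
  have sp: "space \<nu> = UNIV" using sets_eq_imp_space_eq[OF assms(1)] by simp
  have m: "(\<lambda>x::real. x + s) \<in> measurable \<nu> borel"
  proof -
    have m0: "(\<lambda>x::real. x + s) \<in> borel_measurable borel" by measurable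
    show ?thesis unfolding measurable_cong_sets[OF assms(1) refl] by (rule m0)
  qed
  show ?thesis unfolding translate_def
    by (subst emeasure_distr[OF m assms(2)]) (simp add: sp)
qed

lemma pc_tr_em: assumes "A \<in> sets borel"
  shows "emeasure (translate (fst (pc \<beta> g)) s) A = ennreal \<beta> * indicator A s"
proof -
  have "emeasure (translate (fst (pc \<beta> g)) s) A = emeasure (fst (pc \<beta> g)) ((\<lambda>x. x + s) -` A)"
    by (rule tr_em) (auto simp: pc_def assms)
  also have "\<dots> = ennreal \<beta> * indicator A s"
    using pc_em[OF vimage_plus_borel[OF assms]] by (simp add: indicator_def)
  finally show ?thesis .
qed

lemma pc_finite: assumes "g > 0" "\<beta> \<ge> 0"
  shows "finite_piece (pc \<beta> g) \<and> Inf (snd (pc \<beta> g)) = 0"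
proof -
  have lc: "lcro_interval {0..<g}" unfolding lcro_interval_def using assms by blast
  have "emeasure (fst (pc \<beta> g)) {x..x+1} \<le> ennreal \<beta>" for x
    using pc_em[of "{x..x+1}" \<beta> g] by (simp add: indicator_def)
  then have "(SUP x. emeasure (fst (pc \<beta> g)) {x..x+1}) \<le> ennreal \<beta>"
    by (rule SUP_least)
  moreover have "ennreal \<beta> < \<infinity>" by simp
  ultimately have tb: "translation_bounded (fst (pc \<beta> g))"
    unfolding translation_bounded_def by (rule le_less_trans)
  have z: "emeasure (fst (pc \<beta> g)) (UNIV - {0..<g}) = 0"
    using pc_em[of "UNIV - {0..<g}" \<beta> g] assms by simp
  have sn: "snd (pc \<beta> g) = {0..<g}" by (simp only: pc_def snd_conv)
  have sf: "sets (fst (pc \<beta> g)) = sets borel" by (simp only: pc_def fst_conv sets_Mc)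
  have el: "emeasure lborel (snd (pc \<beta> g)) < \<infinity>" using assms unfolding sn by simp
  have i0: "Inf (snd (pc \<beta> g)) = 0" using assms unfolding sn by simp
  show ?thesis unfolding finite_piece_def is_piece_def
    using lc tb z sf el i0 unfolding sn by blast
qed

lemma concat_pc:
  fixes \<beta> g :: "nat \<Rightarrow> real"
  assumes "\<And>j. g j > 0" "\<And>j. \<beta> j \<ge> 0"
  shows "fst (concat_pieces (\<lambda>j. pc (\<beta> j) (g j)) N)
           = Mc (\<lambda>j. if j \<in> N then ennreal (\<beta> j) else 0) (\<lambda>j. \<Sum>k<j. g k)"
    and "snd (concat_pieces (\<lambda>j. pc (\<beta> j) (g j)) N)
           = {x. 0 \<le> x \<and> ennreal x < (\<Sum>j. if j \<in> N then ennreal (g j) else 0)}"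
proof -
  have inf0: "Inf (snd (pc (\<beta> 0) (g 0))) = 0" using assms(1)[of 0] by (simp add: pc_def)
  have infj: "Inf (snd (pc (\<beta> j) (g j))) = 0" for j using assms(1)[of j] by (simp add: pc_def)
  have ml: "measure lborel (snd (pc (\<beta> k) (g k))) = g k" for k
    using assms(1)[of k] by (simp add: pc_def)
  have el: "emeasure lborel (snd (pc (\<beta> k) (g k))) = ennreal (g k)" for k
    using assms(1)[of k] by (simp add: pc_def)
  have ss: "sigma_sets UNIV (sets borel) = (sets borel :: real set set)"
    using sets.sigma_sets_eq[of borel] by simp
  show "fst (concat_pieces (\<lambda>j. pc (\<beta> j) (g j)) N)
           = Mc (\<lambda>j. if j \<in> N then ennreal (\<beta> j) else 0) (\<lambda>j. \<Sum>k<j. g k)"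
  proof -
    have "fst (concat_pieces (\<lambda>j. pc (\<beta> j) (g j)) N) = measure_of UNIV (sets borel)
      (\<lambda>A. \<Sum>j. if j \<in> N then emeasure (translate (fst (pc (\<beta> j) (g j))) (\<Sum>k<j. g k)) A else 0)"
      unfolding concat_pieces_def Let_def fst_conv inf0 infj ml by (simp only: add_0_left diff_zero)
    also have "\<dots> = measure_of UNIV (sets borel) (\<lambda>A. \<Sum>j. (if j \<in> N then ennreal (\<beta> j) else 0) * indicator A (\<Sum>k<j. g k))"
    proof (rule measure_of_eq)
      show "sets borel \<subseteq> Pow UNIV" by simp
      fix A :: "real set" assume "A \<in> sigma_sets UNIV (sets borel)"
      then have A: "A \<in> sets borel" using ss by simp
      show "(\<Sum>j. if j \<in> N then emeasure (translate (fst (pc (\<beta> j) (g j))) (\<Sum>k<j. g k)) A else 0)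
         = (\<Sum>j. (if j \<in> N then ennreal (\<beta> j) else 0) * indicator A (\<Sum>k<j. g k))"
      proof (rule suminf_cong)
        fix j
        show "(if j \<in> N then emeasure (translate (fst (pc (\<beta> j) (g j))) (\<Sum>k<j. g k)) A else 0)
         = (if j \<in> N then ennreal (\<beta> j) else 0) * indicator A (\<Sum>k<j. g k)"
          by (cases "j \<in> N") (simp_all only: if_True if_False pc_tr_em[OF A] mult_zero_left)
      qed
    qed
    also have "\<dots> = Mc (\<lambda>j. if j \<in> N then ennreal (\<beta> j) else 0) (\<lambda>j. \<Sum>k<j. g k)"
      by (rule measure_of_Mc)
    finally show ?thesis .
  qed
  show "snd (concat_pieces (\<lambda>j. pc (\<beta> j) (g j)) N)
           = {x. 0 \<le> x \<and> ennreal x < (\<Sum>j. if j \<in> N then ennreal (g j) else 0)}"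
    unfolding concat_pieces_def Let_def snd_conv inf0 el by (simp only: diff_zero)
qed



lemma restr_point:
  assumes "sets M = sets borel" "y \<in> {0..<L}"
  shows "emeasure (restr M {0..<L}) {y} = emeasure M {y}"
proof -
  have "emeasure (restr M {0..<L}) {y} = emeasure M ({0..<L} \<inter> {y})"
    unfolding restr_def by (rule emeasure_restricted) (auto simp: assms(1))
  also have "{0..<L} \<inter> {y} = {y}" using assms(2) by auto
  finally show ?thesis .
qed

lemma key_vals:
  fixes t :: "nat \<Rightarrow> real" and v :: "nat \<Rightarrow> ennreal"
  assumes mono: "strict_mono t" and n: "n \<ge> 2" and gL: "t (Suc K) - t K < L"
  defines "M \<equiv> restr (Mc (\<lambda>j. if j \<in> {..<n} then v (K + j) else 0) (\<lambda>j. t (K + j) - t K)) {0..<L}"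
  shows "emeasure M {0} = v K"
    and "emeasure M {t (Suc K) - t K} = v (Suc K)"
    and "\<And>y. 0 < y \<Longrightarrow> y < t (Suc K) - t K \<Longrightarrow> emeasure M {y} = 0"
proof -
  define f where "f j = t (K + j) - t K" for j
  define w' where "w' j = (if j \<in> {..<n} then v (K + j) else 0)" for j
  have M: "M = restr (Mc w' f) {0..<L}" unfolding M_def f_def w'_def by simp
  have lt: "t i < t j \<longleftrightarrow> i < j" for i j using mono by (rule strict_mono_less)
  have inj: "inj f" unfolding inj_def f_def
    using mono strict_mono_eq by fastforce
  have g0: "t (Suc K) - t K > 0" using lt[of K "Suc K"] by simp
  have f0: "f 0 = 0" and f1: "f 1 = t (Suc K) - t K" by (simp_all add: f_def)
  show "emeasure M {0} = v K"
    using restr_point[of "Mc w' f" 0 L] Mc_point[OF inj, of w' 0] gL g0 n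
    unfolding M f0 by (simp add: w'_def)
  show "emeasure M {t (Suc K) - t K} = v (Suc K)"
    using restr_point[of "Mc w' f" "t (Suc K) - t K" L] Mc_point[OF inj, of w' 1] gL g0 n
    unfolding M f1 by (simp add: w'_def)
  fix y assume y: "0 < y" "y < t (Suc K) - t K"
  have "f j \<noteq> y" for j
  proof (cases j)
    case 0 then show ?thesis using y by (simp add: f_def)
  next
    case (Suc i)
    then have "t (Suc K) \<le> t (K + j)" using lt[of "Suc K" "K + j"] by (cases "i = 0") auto
    then show ?thesis using y by (simp add: f_def)
  qed
  then have "emeasure (Mc w' f) {y} = 0" by (rule Mc_nopoint)
  then show "emeasure M {y} = 0"
    using restr_point[of "Mc w' f" y L] y gL unfolding M by simp
qed


lemma set_ennreal: "{x::real. 0 \<le> x \<and> ennreal x < ennreal T} = {0..<T}"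
  by (auto simp: ennreal_less_iff)

lemma part_c:
  fixes t b :: "nat \<Rightarrow> real"
  assumes mono: "strict_mono t" and b1: "\<forall>n. b n > 1"
    and fing: "finite (range (\<lambda>n. t (Suc n) - t n))" and finb: "finite (range b)"
  shows "simple_finite_decomposition_property (dirac_comb t b)"
proof -
  define g where "g n = t (Suc n) - t n" for n
  have lt: "t i < t j \<longleftrightarrow> i < j" for i j using mono by (rule strict_mono_less)
  have le: "t i \<le> t j \<longleftrightarrow> i \<le> j" for i j using mono by (rule strict_mono_less_eq)
  have gpos: "g n > 0" for n unfolding g_def using lt[of n "Suc n"] by simp
  have fg: "finite (range g)" using fing unfolding g_def .
  define gmin where "gmin = Min (range g)"
  define gmax where "gmax = Max (range g)"
  have gmin_le: "gmin \<le> g n" for n unfolding gmin_def using fg by simp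
  have gmax_ge: "g n \<le> gmax" for n unfolding gmax_def using fg by simp
  have gmin0: "gmin > 0" unfolding gmin_def using fg gpos by (simp add: Min_gr_iff)
  have bpos: "beta (b n) \<ge> 0" for n using beta_pos b1 by (simp add: less_imp_le)
  define w where "w n = ennreal (beta (b n))" for n
  have wd: "(\<lambda>j. ennreal (beta (b j))) = w" by (rule ext) (simp add: w_def)
  define p where "p j = pc (beta (b j)) (g j)" for j
  have sumg: "(\<Sum>k<j. g (K + k)) = t (K + j) - t K" for K j
    using sum_lessThan_telescope[of "\<lambda>i. t (K + i)" j] by (simp add: g_def)
  define P where "P = (\<lambda>(\<beta>, \<gamma>). pc \<beta> \<gamma>) ` ((\<lambda>n. beta (b n)) ` UNIV \<times> range g)"
  have finP: "finite P" unfolding P_def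
  proof (rule finite_imageI, rule finite_cartesian_product)
    have "(\<lambda>n. beta (b n)) ` UNIV = beta ` range b" by auto
    then show "finite ((\<lambda>n. beta (b n)) ` UNIV)" using finb by simp
  qed (rule fg)
  have pP: "p j \<in> P" for j unfolding P_def p_def
    by (rule rev_image_eqI[of "(beta (b j), g j)"]) auto
  have Pfin: "\<forall>q\<in>P. finite_piece q \<and> Inf (snd q) = 0"
    unfolding P_def using pc_finite gpos bpos by auto
  have cfst: "fst (concat_pieces p UNIV) = Mc w (\<lambda>j. t j - t 0)"
  proof -
    have "fst (concat_pieces p UNIV) = Mc (\<lambda>j. if j \<in> UNIV then ennreal (beta (b j)) else 0) (\<lambda>j. \<Sum>k<j. g k)"
      unfolding p_def by (rule concat_pc(1)) (use gpos bpos in auto)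
    also have "\<dots> = Mc w (\<lambda>j. t j - t 0)"
      using sumg[of 0] by (simp add: wd)
    finally show ?thesis .
  qed
  have suminf_top: "(\<Sum>j. ennreal (g j)) = \<infinity>"
  proof (rule ccontr)
    assume "(\<Sum>j. ennreal (g j)) \<noteq> \<infinity>"
    then obtain r where r: "(\<Sum>j. ennreal (g j)) = ennreal r" "r \<ge> 0"
      by (cases "(\<Sum>j. ennreal (g j))" rule: ennreal_cases) auto
    define n where "n = nat \<lceil>(r + 1) / gmin\<rceil>"
    have "real n * gmin \<ge> r + 1"
    proof -
      have "real n \<ge> (r + 1) / gmin" unfolding n_def by linarith
      then show ?thesis using gmin0 by (simp add: field_simps)
    qed
    moreover have "real n * gmin \<le> t (0 + n) - t 0"
      by (rule gap_mult) (use gmin_le in \<open>simp add: g_def\<close>)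
    moreover have "ennreal (t n - t 0) \<le> ennreal r"
    proof -
      have "ennreal (t n - t 0) = (\<Sum>k<n. ennreal (g k))"
        using sumg[of 0 n] gpos by (simp add: less_imp_le)
      also have "\<dots> \<le> (\<Sum>j. ennreal (g j))"
        by (rule sum_le_suminf) auto
      finally show ?thesis using r by simp
    qed
    then have "t n - t 0 \<le> r" using r(2) by simp
    ultimately show False by simp
  qed
  have csnd: "snd (concat_pieces p UNIV) = {0..}"
  proof -
    have "snd (concat_pieces p UNIV) = {x. 0 \<le> x \<and> ennreal x < (\<Sum>j. if j \<in> UNIV then ennreal (g j) else 0)}"
      unfolding p_def by (rule concat_pc(2)) (use gpos bpos in auto)
    then show ?thesis using suminf_top by auto
  qed
  have mu: "dirac_comb t b = Mc w t" unfolding w_def by (rule dirac_comb_Mc)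
  have trm: "translate (restr (dirac_comb t b) {t 0..}) (- t 0) = Mc w (\<lambda>j. t j - t 0)"
  proof (rule measure_eqI)
    show "sets (translate (restr (dirac_comb t b) {t 0..}) (- t 0)) = sets (Mc w (\<lambda>j. t j - t 0))"
      by (simp add: translate_def)
    fix A assume "A \<in> sets (translate (restr (dirac_comb t b) {t 0..}) (- t 0))"
    then have A: "A \<in> sets borel" by (simp add: translate_def)
    have sr: "sets (restr (Mc w t) {t 0..}) = sets borel" by (simp add: restr_def)
    have "emeasure (translate (restr (Mc w t) {t 0..}) (- t 0)) A
        = emeasure (restr (Mc w t) {t 0..}) ((\<lambda>x. x + - t 0) -` A)"
      by (rule tr_em[OF sr A])
    also have "\<dots> = emeasure (Mc w t) ({t 0..} \<inter> (\<lambda>x. x + - t 0) -` A)"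
      unfolding restr_def by (rule emeasure_restricted) (use vimage_plus_borel[OF A, of "- t 0"] in auto)
    also have "\<dots> = (\<Sum>n. w n * indicator ({t 0..} \<inter> (\<lambda>x. x + - t 0) -` A) (t n))"
      by (rule emeasure_Mc) (use vimage_plus_borel[OF A, of "- t 0"] in auto)
    also have "\<dots> = (\<Sum>n. w n * indicator A (t n - t 0))"
      using le[of 0] by (auto simp: indicator_def intro!: suminf_cong)
    also have "\<dots> = emeasure (Mc w (\<lambda>j. t j - t 0)) A"
      by (rule emeasure_Mc[symmetric, OF A])
    finally show "emeasure (translate (restr (dirac_comb t b) {t 0..}) (- t 0)) A = emeasure (Mc w (\<lambda>j. t j - t 0)) A"
      unfolding mu .
  qed
  have img: "(\<lambda>x. x + - t 0) ` {t 0..} = {0..}"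
    by (auto simp: image_iff intro!: bexI[where x="_ + t 0"])
  have decomp: "translate_piece (restr (dirac_comb t b) {t 0..}, {t 0..}) (- t 0) = concat_pieces p UNIV"
    unfolding translate_piece_def fst_conv snd_conv trm img
    by (rule prod_eqI) (simp_all add: cfst csnd)
  have W: "fdp_witness (dirac_comb t b) P p (t 0)"
    unfolding fdp_witness_def using finP Pfin pP decomp by blast
  have con_fst: "fst (concat_pieces (\<lambda>r. p (K + r)) {..<n})
      = Mc (\<lambda>j. if j \<in> {..<n} then w (K + j) else 0) (\<lambda>j. t (K + j) - t K)" for K n
  proof -
    have "fst (concat_pieces (\<lambda>r. p (K + r)) {..<n})
        = Mc (\<lambda>j. if j \<in> {..<n} then ennreal (beta (b (K + j))) else 0) (\<lambda>j. \<Sum>k<j. g (K + k))"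
      unfolding p_def by (rule concat_pc(1)) (use gpos bpos in auto)
    then show ?thesis using sumg[of K] unfolding w_def by simp
  qed
  have con_len: "emeasure lborel (snd (concat_pieces (\<lambda>r. p (K + r)) {..<n})) = ennreal (t (K + n) - t K)" for K n
  proof -
    have s: "snd (concat_pieces (\<lambda>r. p (K + r)) {..<n})
        = {x. 0 \<le> x \<and> ennreal x < (\<Sum>j. if j \<in> {..<n} then ennreal (g (K + j)) else 0)}"
      unfolding p_def by (rule concat_pc(2)) (use gpos bpos in auto)
    have "(\<Sum>j. if j \<in> {..<n} then ennreal (g (K + j)) else 0)
        = (\<Sum>j\<in>{..<n}. if j \<in> {..<n} then ennreal (g (K + j)) else 0)"
      by (rule suminf_finite) auto
    also have "\<dots> = (\<Sum>j<n. ennreal (g (K + j)))" by simp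
    also have "\<dots> = ennreal (\<Sum>j<n. g (K + j))" by (intro sum_ennreal less_imp_le gpos)
    also have "\<dots> = ennreal (t (K + n) - t K)" by (simp only: sumg)
    finally have se: "(\<Sum>j. if j \<in> {..<n} then ennreal (g (K + j)) else 0) = ennreal (t (K + n) - t K)" .
    have "snd (concat_pieces (\<lambda>r. p (K + r)) {..<n}) = {0..<t (K + n) - t K}"
      unfolding s se by (rule set_ennreal)
    moreover have "t K \<le> t (K + n)" using le by simp
    ultimately show ?thesis by simp
  qed
  define L where "L = gmax + 1"
  have gL: "t (Suc K) - t K < L" for K using gmax_ge[of K] unfolding L_def g_def by simp
  have L0: "L > 0" using gL[of 0] gpos[of 0] unfolding g_def by simp
  have len2: "2 \<le> n" if h: "ennreal L \<le> emeasure lborel (snd (concat_pieces (\<lambda>r. p (K + r)) {..<n}))" for K n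
  proof (rule ccontr)
    assume "\<not> 2 \<le> n"
    then have "n = 0 \<or> n = 1" by auto
    then have "t (K + n) - t K \<le> t (Suc K) - t K" using gpos[of K] by (auto simp: g_def)
    moreover have "t K \<le> t (K + n)" using le by simp
    moreover have "L \<le> t (K + n) - t K" using h con_len[of K n] \<open>t K \<le> t (K + n)\<close> by simp
    ultimately show False using gL[of K] by simp
  qed
  have wnz: "w n \<noteq> 0" for n
  proof -
    have "beta (b n) > 0" using beta_pos b1 by blast
    then show ?thesis unfolding w_def by simp
  qed
  have det: "p K = p K'" if n: "2 \<le> n" "2 \<le> n'"
    and eq: "restr (fst (concat_pieces (\<lambda>r. p (K + r)) {..<n})) {0..<L}
           = restr (fst (concat_pieces (\<lambda>r. p (K' + r)) {..<n'})) {0..<L}" for K K' n n'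
  proof -
    have E: "restr (Mc (\<lambda>j. if j \<in> {..<n} then w (K + j) else 0) (\<lambda>j. t (K + j) - t K)) {0..<L}
        = restr (Mc (\<lambda>j. if j \<in> {..<n'} then w (K' + j) else 0) (\<lambda>j. t (K' + j) - t K')) {0..<L}"
      using eq unfolding con_fst .
    note kv = key_vals[OF mono n(1) gL[of K], where v=w]
    note kv' = key_vals[OF mono n(2) gL[of K'], where v=w]
    have "w K = w K'" using kv(1) kv'(1) E by simp
    then have bb: "beta (b K) = beta (b K')" unfolding w_def using bpos by simp
    have gg: "g K = g K'"
    proof (rule ccontr)
      assume "g K \<noteq> g K'"
      then consider "g K < g K'" | "g K' < g K" by linarith
      then show False
      proof cases
        case 1
        have "emeasure (restr (Mc (\<lambda>j. if j \<in> {..<n'} then w (K' + j) else 0) (\<lambda>j. t (K' + j) - t K')) {0..<L}) {g K} = 0"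
          by (rule kv'(3)) (use 1 gpos[of K] in \<open>auto simp: g_def\<close>)
        then show False using kv(2) E wnz[of "Suc K"] by (simp add: g_def)
      next
        case 2
        have "emeasure (restr (Mc (\<lambda>j. if j \<in> {..<n} then w (K + j) else 0) (\<lambda>j. t (K + j) - t K)) {0..<L}) {g K'} = 0"
          by (rule kv(3)) (use 2 gpos[of K'] in \<open>auto simp: g_def\<close>)
        then show False using kv'(2) E wnz[of "Suc K'"] by (simp add: g_def)
      qed
    qed
    show ?thesis unfolding p_def using bb gg by simp
  qed
  have cond: "\<forall>k k' m m1 m2.
         (\<forall>r\<le>m. p (k + r) = p (k' + r))
         \<and> emeasure lborel (snd (concat_pieces (\<lambda>r. p (k + r)) {..m})) \<ge> ennreal L
         \<and> emeasure lborel (snd (concat_pieces (\<lambda>r. p (k + m + 1 + r)) {..<m1})) \<ge> ennreal L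
         \<and> emeasure lborel (snd (concat_pieces (\<lambda>r. p (k' + m + 1 + r)) {..<m2})) \<ge> ennreal L
         \<and> restr (fst (concat_pieces (\<lambda>r. p (k + m + 1 + r)) {..<m1})) {0..<L}
           = restr (fst (concat_pieces (\<lambda>r. p (k' + m + 1 + r)) {..<m2})) {0..<L}
         \<longrightarrow> p (k + m + 1) = p (k' + m + 1)"
  proof (intro allI impI, elim conjE)
    fix k k' m m1 m2
    assume h1: "ennreal L \<le> emeasure lborel (snd (concat_pieces (\<lambda>r. p (k + m + 1 + r)) {..<m1}))"
      and h2: "ennreal L \<le> emeasure lborel (snd (concat_pieces (\<lambda>r. p (k' + m + 1 + r)) {..<m2}))"
      and h3: "restr (fst (concat_pieces (\<lambda>r. p (k + m + 1 + r)) {..<m1})) {0..<L}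
           = restr (fst (concat_pieces (\<lambda>r. p (k' + m + 1 + r)) {..<m2})) {0..<L}"
    show "p (k + m + 1) = p (k' + m + 1)"
      by (rule det[OF len2[OF h1] len2[OF h2] h3])
  qed
  show ?thesis unfolding simple_finite_decomposition_property_def
    using W L0 cond by blast
qed


theorem lemma4p3:
  fixes t b :: "nat \<Rightarrow> real"
  assumes "strict_mono t"
    and "\<forall>n. b n > 1"
  shows "((INF n. t (Suc n) - t n) > 0 \<and> (INF n. b n) > 1
            \<longrightarrow> translation_bounded (dirac_comb t b))
       \<and> (eventually_periodic_seq (\<lambda>n. (t (Suc n) - t n, b n))
            \<longrightarrow> eventually_periodic_measure (dirac_comb t b))
       \<and> (filterlim t at_top sequentially
            \<longrightarrow> eventually_periodic_measure (dirac_comb t b)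
            \<longrightarrow> eventually_periodic_seq (\<lambda>n. (t (Suc n) - t n, b n)))
       \<and> (finite (range (\<lambda>n. t (Suc n) - t n)) \<and> finite (range b)
            \<longrightarrow> simple_finite_decomposition_property (dirac_comb t b))"
proof (intro conjI impI)
  assume "(INF n. t (Suc n) - t n) > 0 \<and> (INF n. b n) > 1"
  then show "translation_bounded (dirac_comb t b)"
    using part_a[OF assms] by (elim conjE)
next
  assume "eventually_periodic_seq (\<lambda>n. (t (Suc n) - t n, b n))"
  then show "eventually_periodic_measure (dirac_comb t b)"
    by (rule part_b1[OF assms(1)])
next
  assume "filterlim t at_top sequentially" "eventually_periodic_measure (dirac_comb t b)"
  then show "eventually_periodic_seq (\<lambda>n. (t (Suc n) - t n, b n))"
    by (rule part_b2[OF assms])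
next
  assume "finite (range (\<lambda>n. t (Suc n) - t n)) \<and> finite (range b)"
  then show "simple_finite_decomposition_property (dirac_comb t b)"
    using part_c[OF assms] by (elim conjE)
qed

end
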